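(* Let $\{(a_i,b_i,m_i,n_i)\in(0,\infty)^2\times\mathbb{R}^2 : i\in\mathbb{Z}\}$ be a positive ABMN solution. Then: (1) the solution is strict, i.e. $m_{i+1}>m_i$ and $n_i>n_{i+1}$ for all $i\in\mathbb{Z}$; (2) the limits $m_{-\infty}=\lim_{k\to\infty}m_{-k}$, $m_\infty=\lim_{k\to\infty}m_k$, $n_{-\infty}=\lim_{k\to\infty}n_{-k}$, $n_\infty=\lim_{k\to\infty}n_k$ exist in $\mathbb{R}\cup\{\pm\infty\}$ and satisfy $m_\infty>m_{-\infty}$ and $n_{-\infty}>n_\infty$; (3) these four limits are real numbers; in particular the Mina margin $\frac{n_{-\infty}-n_\infty}{m_\infty-m_{-\infty}}$ is a positive finite real number.
   Context: The ABMN system on $\mathbb{Z}$ is the following set of equations in real variables $a_i,b_i,m_i,n_i$ ($i\in\mathbb{Z}$), with $a_i,b_i\ge 0$ always assumed: for every $i\in\mathbb{Z}$, $(a_i+b_i)(m_i+a_i)=a_im_{i+1}+b_im_{i-1}$; $(a_i+b_i)(n_i+b_i)=a_in_{i+1}+b_in_{i-1}$; $(a_i+b_i)^2=b_i(m_{i+1}-m_{i-1})$; $(a_i+b_i)^2=a_i(n_{i-1}-n_{i+1})$. A solution is positive if $a_i>0$ and $b_i>0$ for all $i$; it is strict if $m_{i+1}>m_i$ and $n_i>n_{i+1}$ for all $i$. Its boundary data is $(m_{-\infty},m_\infty,n_{-\infty},n_\infty)$, the limits $\lim_{k\to\infty}m_{-k}$, $\lim_{k\to\infty}m_k$, $\lim_{k\to\infty}n_{-k}$,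 $\lim_{k\to\infty}n_k$ (when they exist), and its Mina margin is $\frac{n_{-\infty}-n_\infty}{m_\infty-m_{-\infty}}$. *)

theory Defs
  imports "HOL-Analysis.Analysis"
begin

definition ABMN :: "(int \<Rightarrow> real) \<Rightarrow> (int \<Rightarrow> real) \<Rightarrow> (int \<Rightarrow> real) \<Rightarrow> (int \<Rightarrow> real) \<Rightarrow> bool" where
  "ABMN a b m n \<longleftrightarrow> (\<forall>i::int.
      a i \<ge> 0 \<and> b i \<ge> 0 \<and>
      (a i + b i) * (m i + a i) = a i * m (i + 1) + b i * m (i - 1) \<and>
      (a i + b i) * (n i + b i) = a i * n (i + 1) + b i * n (i - 1) \<and>
      (a i + b i)^2 = b i * (m (i + 1) - m (i - 1)) \<and>
      (a i + b i)^2 = a i * (n (i - 1) - n (i + 1)))"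

definition positive_ABMN :: "(int \<Rightarrow> real) \<Rightarrow> (int \<Rightarrow> real) \<Rightarrow> (int \<Rightarrow> real) \<Rightarrow> (int \<Rightarrow> real) \<Rightarrow> bool" where
  "positive_ABMN a b m n \<longleftrightarrow> ABMN a b m n \<and> (\<forall>i. a i > 0 \<and> b i > 0)"

definition strict_ABMN :: "(int \<Rightarrow> real) \<Rightarrow> (int \<Rightarrow> real) \<Rightarrow> bool" where
  "strict_ABMN m n \<longleftrightarrow> (\<forall>i::int. m (i + 1) > m i \<and> n i > n (i + 1))"

end

theory Submission imports Defs begin
lemma ids:
  assumes "positive_ABMN a b m n"
  shows "m (i+1) - m i = 2*a i + b i" "m i - m (i-1) = (a i)^2 / b i"
        "n (i-1) - n i = a i + 2*b i" "n i - n (i+1) = (b i)^2 / a i"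
proof -
  have ap: "a i > 0" and bp: "b i > 0" using assms unfolding positive_ABMN_def by auto
  have e1: "(a i + b i) * (m i + a i) = a i * m (i + 1) + b i * m (i - 1)"
   and e2: "(a i + b i) * (n i + b i) = a i * n (i + 1) + b i * n (i - 1)"
   and e3: "(a i + b i)^2 = b i * (m (i + 1) - m (i - 1))"
   and e4: "(a i + b i)^2 = a i * (n (i - 1) - n (i + 1))"
    using assms unfolding positive_ABMN_def ABMN_def by blast+
  have "(a i + b i) * (m (i+1) - m i) = (a i + b i) * (2*a i + b i)"
    using e1 e3 by (simp add: algebra_simps power2_eq_square)
  then show X: "m (i+1) - m i = 2*a i + b i" using ap bp by simp
  have "b i * (m i - m (i-1)) = (a i)^2" using X e3 by (simp add: algebra_simps power2_eq_square)
  then show "m i - m (i-1) = (a i)^2 / b i" using bp by (simp add: field_simps)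
  have "(a i + b i) * (n (i-1) - n i) = (a i + b i) * (a i + 2*b i)"
    using e2 e4 by (simp add: algebra_simps power2_eq_square)
  then show Y: "n (i-1) - n i = a i + 2*b i" using ap bp by simp
  have "a i * (n i - n (i+1)) = (b i)^2" using Y e4 by (simp add: algebra_simps power2_eq_square)
  then show "n i - n (i+1) = (b i)^2 / a i" using ap by (simp add: field_simps)
qed

lemma pos: "positive_ABMN a b m n \<Longrightarrow> a i > 0 \<and> b i > 0"
  unfolding positive_ABMN_def by auto

lemma fwd:
  assumes P: "positive_ABMN a b m n"
  shows "\<exists>N B C. \<forall>i\<ge>N. m i \<le> B \<and> n i \<ge> C"
proof -
  have ab: "\<And>i. a i > 0" "\<And>i. b i > 0" using pos[OF P] by auto
  have r1: "a (i+1) \<le> (b i)^2 / a i" and r2: "2 * b (i+1) \<le> (b i)^2 / a i" for i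
    using ids(3)[OF P, of "i+1"] ids(4)[OF P, of i] ab[of "i+1"] by auto
  have r3: "(a (i+1))^2 = (2*a i + b i) * b (i+1)" for i
    using ids(1)[OF P, of i] ids(2)[OF P, of "i+1"] ab[of "i+1"] by (simp add: field_simps)
  define t where "t i = a i / b i" for i
  have tp: "t i > 0" for i using ab unfolding t_def by auto
  have tstep: "t (i+1) \<ge> t i + 2 * (t i)^2" for i
  proof -
    have "t (i+1) = (2*a i + b i) / a (i+1)"
      using r3[of i] ab[of "i+1"] unfolding t_def by (simp add: field_simps power2_eq_square)
    also have "\<dots> \<ge> (2*a i + b i) / ((b i)^2 / a i)"
      using r1[of i] ab[of i] ab[of "i+1"] by (intro divide_left_mono) auto
    also have "(2*a i + b i) / ((b i)^2 / a i) = t i + 2 * (t i)^2"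
      unfolding t_def using ab[of i] by (simp add: field_simps power2_eq_square)
    finally show ?thesis .
  qed
  have tmono: "t i \<le> t j" if "i \<le> j" for i j
    using that
  proof (induction j rule: int_ge_induct)
    case base then show ?case by simp
  next
    case (step j) then show ?case using tstep[of j] by (smt (verit) zero_le_power2)
  qed
  have tlin: "t (int k) \<ge> t 0 + 2 * real k * (t 0)^2" for k
  proof (induction k)
    case 0 then show ?case by simp
  next
    case (Suc k)
    have "t (int k) \<ge> t 0" using tmono by simp
    then have "(t (int k))^2 \<ge> (t 0)^2" using tp[of 0] by (intro power_mono) auto
    then show ?case using Suc tstep[of "int k"] by (simp add: algebra_simps)
  qed
  obtain K :: nat where K: "1 / (2 * (t 0)^2) < real K" using reals_Archimedean2 by blast
  have "2 * real K * (t 0)^2 > 1" using K tp[of 0] by (simp add: field_simps)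
  then have tK: "t (int K) \<ge> 1" using tlin[of K] tp[of 0] by linarith
  define N where "N = int K"
  have big: "b i \<le> a i" if "i \<ge> N" for i
  proof -
    have "t i \<ge> 1" using tmono[OF that] tK unfolding N_def by linarith
    then show ?thesis using ab[of i] unfolding t_def by (simp add: field_simps)
  qed
  have q: "(b i)^2 / a i \<le> b i" if "i \<ge> N" for i
    using big[OF that] ab[of i] by (simp add: field_simps power2_eq_square mult_right_mono)
  define \<Phi> where "\<Phi> i = m i + 2 * a i + 6 * b i" for i
  define \<Psi> where "\<Psi> i = n i - 2 * b i" for i
  have \<Phi>step: "\<Phi> (i+1) \<le> \<Phi> i" if "i \<ge> N" for i
    using ids(1)[OF P, of i] r1[of i] r2[of i] q[OF that] unfolding \<Phi>_def by linarith
  have \<Psi>step: "\<Psi> (i+1) \<ge> \<Psi> i" if "i \<ge> N" for i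
    using ids(4)[OF P, of i] r2[of i] q[OF that] unfolding \<Psi>_def by linarith
  have "\<Phi> i \<le> \<Phi> N \<and> \<Psi> i \<ge> \<Psi> N" if "i \<ge> N" for i
    using that
  proof (induction i rule: int_ge_induct)
    case base then show ?case by simp
  next
    case (step j) then show ?case using \<Phi>step[of j] \<Psi>step[of j] by linarith
  qed
  then have "\<forall>i\<ge>N. m i \<le> \<Phi> N \<and> n i \<ge> \<Psi> N"
    using ab unfolding \<Phi>_def \<Psi>_def by (smt (verit))
  then show ?thesis by blast
qed

lemma sym:
  assumes P: "positive_ABMN a b m n"
  shows "positive_ABMN (\<lambda>i. b (-i)) (\<lambda>i. a (-i)) (\<lambda>i. n (-i)) (\<lambda>i. m (-i))"
  unfolding positive_ABMN_def ABMN_def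
proof (intro conjI allI)
  fix i :: int
  have h: "-(i+1) = -i - 1" "-(i-1) = -i + 1" by simp_all
  show "b (-i) > 0" "a (-i) > 0" using pos[OF P] by auto
  show "b (-i) \<ge> 0" "a (-i) \<ge> 0" using pos[OF P] by (auto intro: less_imp_le)
  have e: "(a j + b j) * (m j + a j) = a j * m (j + 1) + b j * m (j - 1) \<and>
      (a j + b j) * (n j + b j) = a j * n (j + 1) + b j * n (j - 1) \<and>
      (a j + b j)^2 = b j * (m (j + 1) - m (j - 1)) \<and>
      (a j + b j)^2 = a j * (n (j - 1) - n (j + 1))" for j
    using P unfolding positive_ABMN_def ABMN_def by blast
  note E = e[of "-i"]
  show "(b (- i) + a (- i)) * (n (- i) + b (- i)) = b (- i) * n (- (i + 1)) + a (- i) * n (- (i - 1))"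
    "(b (- i) + a (- i)) * (m (- i) + a (- i)) = b (- i) * m (- (i + 1)) + a (- i) * m (- (i - 1))"
    "(b (- i) + a (- i))\<^sup>2 = a (- i) * (n (- (i + 1)) - n (- (i - 1)))"
    "(b (- i) + a (- i))\<^sup>2 = b (- i) * (m (- (i - 1)) - m (- (i + 1)))"
    using E unfolding h by (simp_all add: algebra_simps)
qed

lemma mono_int: fixes f :: "int \<Rightarrow> real" assumes "\<And>i. f i \<le> f (i+1)" shows "mono f"
proof (rule monoI)
  fix x y :: int assume "x \<le> y" then show "f x \<le> f y"
  proof (induction y rule: int_ge_induct)
    case base then show ?case by simp
  next
    case (step j) then show ?case using assms[of j] by linarith
  qed
qed

lemma lim_top: fixes f :: "int \<Rightarrow> real"
  assumes "mono f" "bdd_above (range f)" shows "(f \<longlongrightarrow> Sup (range f)) at_top"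
proof (rule order_tendstoI)
  fix y assume "y < Sup (range f)"
  then obtain i where i: "y < f i" using less_cSup_iff[of "range f" y] assms(2) by auto
  show "\<forall>\<^sub>F x in at_top. y < f x"
    using eventually_ge_at_top[of i]
    by eventually_elim (use i assms(1) in \<open>meson le_less_trans monoD less_le_trans\<close>)
next
  fix y assume "Sup (range f) < y"
  then show "\<forall>\<^sub>F x in at_top. f x < y"
    using cSUP_upper[OF _ assms(2)] by (intro always_eventually) (meson UNIV_I le_less_trans)
qed

lemma lim_bot: fixes f :: "int \<Rightarrow> real"
  assumes "mono f" "bdd_below (range f)" shows "(f \<longlongrightarrow> Inf (range f)) at_bot"
proof (rule order_tendstoI)
  fix y assume "Inf (range f) < y"
  then obtain i where i: "f i < y" using cInf_less_iff[of "range f" y] assms(2) by auto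
  show "\<forall>\<^sub>F x in at_bot. f x < y"
    using eventually_le_at_bot[of i]
    by eventually_elim (use i assms(1) in \<open>meson le_less_trans monoD\<close>)
next
  fix y assume "y < Inf (range f)"
  then show "\<forall>\<^sub>F x in at_bot. y < f x"
    using cINF_lower[OF assms(2)] by (intro always_eventually) (meson UNIV_I less_le_trans)
qed

theorem mainTheorem1:
  fixes a b m n :: "int \<Rightarrow> real"
  assumes "positive_ABMN a b m n"
  shows "strict_ABMN m n \<and>
    (\<exists>m_minf m_inf n_minf n_inf :: real.
       (m \<longlongrightarrow> m_minf) at_bot \<and> (m \<longlongrightarrow> m_inf) at_top \<and>
       (n \<longlongrightarrow> n_minf) at_bot \<and> (n \<longlongrightarrow> n_inf) at_top \<and>
       m_inf > m_minf \<and> n_minf > n_inf \<and>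
       (n_minf - n_inf) / (m_inf - m_minf) > 0)"
proof -
  note P = assms
  have ab: "\<And>i. a i > 0" "\<And>i. b i > 0" using pos[OF P] by auto
  have sm: "m i < m (i+1)" for i using ids(1)[OF P, of i] ab[of i] by linarith
  have sn: "n (i+1) < n i" for i
  proof -
    have "(b i)^2 / a i > 0" using ab[of i] by simp
    then show ?thesis using ids(4)[OF P, of i] by linarith
  qed
  have st: "strict_ABMN m n" unfolding strict_ABMN_def using sm sn by auto
  have mm: "mono m" by (rule mono_int) (use sm in \<open>simp add: less_imp_le\<close>)
  define g where "g i = - n i" for i
  have mg: "mono g" by (rule mono_int) (use sn in \<open>simp add: g_def less_imp_le\<close>)
  obtain N B C where F: "\<forall>i\<ge>N. m i \<le> B \<and> n i \<ge> C" using fwd[OF P] by blast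
  obtain N' B' C' where F': "\<forall>i\<ge>N'. n (-i) \<le> B' \<and> m (-i) \<ge> C'" using fwd[OF sym[OF P]] by auto
  have "m i \<le> max B (m N)" for i
    using F monoD[OF mm, of i N] by (cases "i \<le> N") auto
  then have ma: "bdd_above (range m)" by (intro bdd_aboveI) auto
  have "m i \<ge> min C' (m (-N'))" for i
  proof (cases "i \<le> -N'")
    case True then show ?thesis using F'[rule_format, of "-i"] by auto
  next
    case False then show ?thesis using monoD[OF mm, of "-N'" i] by auto
  qed
  then have mb: "bdd_below (range m)" by (intro bdd_belowI) auto
  have "g i \<le> max (-C) (g N)" for i
    using F monoD[OF mg, of i N] unfolding g_def by (cases "i \<le> N") auto
  then have ga: "bdd_above (range g)" by (intro bdd_aboveI) auto
  have "g i \<ge> min (-B') (g (-N'))" for i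
  proof (cases "i \<le> -N'")
    case True then show ?thesis using F'[rule_format, of "-i"] unfolding g_def by auto
  next
    case False then show ?thesis using monoD[OF mg, of "-N'" i] by auto
  qed
  then have gb: "bdd_below (range g)" by (intro bdd_belowI) auto
  define m1 where "m1 = Inf (range m)"
  define m2 where "m2 = Sup (range m)"
  define n1 where "n1 = - Inf (range g)"
  define n2 where "n2 = - Sup (range g)"
  have L1: "(m \<longlongrightarrow> m1) at_bot" unfolding m1_def by (rule lim_bot[OF mm mb])
  have L2: "(m \<longlongrightarrow> m2) at_top" unfolding m2_def by (rule lim_top[OF mm ma])
  have "((\<lambda>i. - g i) \<longlongrightarrow> n1) at_bot" unfolding n1_def by (intro tendsto_minus lim_bot[OF mg gb])
  then have L3: "(n \<longlongrightarrow> n1) at_bot" unfolding g_def by simp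
  have "((\<lambda>i. - g i) \<longlongrightarrow> n2) at_top" unfolding n2_def by (intro tendsto_minus lim_top[OF mg ga])
  then have L4: "(n \<longlongrightarrow> n2) at_top" unfolding g_def by simp
  have "m1 \<le> m 0" unfolding m1_def using cINF_lower[OF mb, of 0] by simp
  moreover have "m 1 \<le> m2" unfolding m2_def using cSUP_upper[OF _ ma, of 1] by simp
  ultimately have c1: "m2 > m1" using sm[of 0] by simp
  have "g 0 \<ge> Inf (range g)" using cINF_lower[OF gb, of 0] by simp
  moreover have "g 1 \<le> Sup (range g)" using cSUP_upper[OF _ ga, of 1] by simp
  ultimately have c2: "n1 > n2" using sn[of 0] unfolding n1_def n2_def g_def by simp
  have "(n1 - n2) / (m2 - m1) > 0" using c1 c2 by simp
  then show ?thesis using st L1 L2 L3 L4 c1 c2 by blast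
qed
end
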